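(* Let $\alpha\ge1$ and $0<\theta,b\le1$. Let $\nu,\mu$ be the Gibbs distributions of two Ising models $(G,J^\nu,h^\nu)$ and $(G,J^\mu,h^\mu)$ on $G=(V,E)$. If $d_{\mathrm{par}}(\nu,\mu)\ge\theta$ and both $\nu$ and $\mu$ are $b$-marginally bounded, then $$D_{\chi^\alpha}(\nu\|\mu)\ \ge\ B_{\alpha,b}(\theta)\sum_{\sigma\in\{-1,+1\}^V}\mu(\sigma)\left(\frac{\nu(\sigma)}{\mu(\sigma)}+1\right)^\alpha,$$ where, writing $s=\left(\frac{b^{2\alpha}\theta^\alpha}{2}\right)^{1/(\alpha+1)}$, $$B_{\alpha,b}(\theta)=\frac{b^{2\alpha}\theta^\alpha}{2}\,(s+2)^{-\alpha}\,(2s+1)^{-1}.$$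
   Context: An Ising model $(G,J,h)$ on $G=(V,E)$ consists of a symmetric $J\in\mathbb{R}^{V\times V}$ with $J_{uv}\ne0$ only if $\{u,v\}\in E$, and $h\in\mathbb{R}^V$; its Gibbs distribution on $\{-1,+1\}^V$ is $\mu(\sigma)\propto\exp(\tfrac12\sigma^TJ\sigma+h^T\sigma)$. The $\chi^\alpha$-divergence is $D_{\chi^\alpha}(\nu\|\mu)=\sum_\sigma\mu(\sigma)\cdot\frac12\left|\frac{\nu(\sigma)}{\mu(\sigma)}-1\right|^\alpha$. The parameter distance is $d_{\mathrm{par}}(\nu,\mu)=\max\left\{\max_{u,v}|J^\nu_{uv}-J^\mu_{uv}|,\ \max_{v\in V}\frac{|h^\nu(v)-h^\mu(v)|}{\deg(v)+1}\right\}$. $\mu$ is $b$-marginally bounded if for every $\Lambda\subseteq V$, pinning $\sigma\in\{-1,+1\}^\Lambda$, $v\notin\Lambda$, $c\in\{-1,+1\}$, the conditional marginal probability that $v$ takes value $c$ given $\sigma$ on $\Lambda$ is at least $b$. *)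

theory Defs
  imports Complex_Main
begin

text \<open>The graph G = (V,E): the vertex set V is the (finite) universe of the type 'v,
  E is a symmetric irreflexive edge relation.\<close>
definition simple_graph :: "('v \<Rightarrow> 'v \<Rightarrow> bool) \<Rightarrow> bool" where
  "simple_graph E \<longleftrightarrow> (\<forall>u v. E u v = E v u) \<and> (\<forall>v. \<not> E v v)"

definition deg :: "('v \<Rightarrow> 'v \<Rightarrow> bool) \<Rightarrow> 'v \<Rightarrow> nat" where
  "deg E v = card {u. E u v}"

definition configs :: "('v \<Rightarrow> real) set" where
  "configs = {\<sigma>. \<forall>v. \<sigma> v = 1 \<or> \<sigma> v = -1}"

definition ising_model :: "('v \<Rightarrow> 'v \<Rightarrow> bool) \<Rightarrow> ('v \<Rightarrow> 'v \<Rightarrow> real) \<Rightarrow> ('v \<Rightarrow> real) \<Rightarrow> bool" where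
  "ising_model E J h \<longleftrightarrow> simple_graph E \<and> (\<forall>u v. J u v = J v u) \<and> (\<forall>u v. J u v \<noteq> 0 \<longrightarrow> E u v)"

definition gibbs_weight :: "('v::finite \<Rightarrow> 'v \<Rightarrow> real) \<Rightarrow> ('v \<Rightarrow> real) \<Rightarrow> ('v \<Rightarrow> real) \<Rightarrow> real" where
  "gibbs_weight J h \<sigma> = exp ((1/2) * (\<Sum>u\<in>UNIV. \<Sum>v\<in>UNIV. \<sigma> u * J u v * \<sigma> v) + (\<Sum>v\<in>UNIV. h v * \<sigma> v))"

definition gibbs :: "('v::finite \<Rightarrow> 'v \<Rightarrow> real) \<Rightarrow> ('v \<Rightarrow> real) \<Rightarrow> ('v \<Rightarrow> real) \<Rightarrow> real" where
  "gibbs J h \<sigma> = gibbs_weight J h \<sigma> / (\<Sum>\<tau>\<in>configs. gibbs_weight J h \<tau>)"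

text \<open>b-marginal boundedness of a distribution p on configs. A pinning on \<Lambda> is
  given as the restriction to \<Lambda> of a configuration \<tau>.\<close>
definition marginally_bounded :: "real \<Rightarrow> (('v::finite \<Rightarrow> real) \<Rightarrow> real) \<Rightarrow> bool" where
  "marginally_bounded b p \<longleftrightarrow>
     (\<forall>\<Lambda> \<tau> v c. \<tau> \<in> configs \<longrightarrow> v \<notin> \<Lambda> \<longrightarrow> (c = 1 \<or> c = -1) \<longrightarrow>
        (\<Sum>\<sigma>\<in>{\<sigma>\<in>configs. (\<forall>u\<in>\<Lambda>. \<sigma> u = \<tau> u) \<and> \<sigma> v = c}. p \<sigma>)
          / (\<Sum>\<sigma>\<in>{\<sigma>\<in>configs. \<forall>u\<in>\<Lambda>. \<sigma> u = \<tau> u}. p \<sigma>) \<ge> b)"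

definition chi_div :: "real \<Rightarrow> (('v::finite \<Rightarrow> real) \<Rightarrow> real) \<Rightarrow> (('v \<Rightarrow> real) \<Rightarrow> real) \<Rightarrow> real" where
  "chi_div \<alpha> \<nu> \<mu> = (\<Sum>\<sigma>\<in>configs. \<mu> \<sigma> * ((1/2) * \<bar>\<nu> \<sigma> / \<mu> \<sigma> - 1\<bar> powr \<alpha>))"

definition d_par :: "('v::finite \<Rightarrow> 'v \<Rightarrow> bool) \<Rightarrow> ('v \<Rightarrow> 'v \<Rightarrow> real) \<Rightarrow> ('v \<Rightarrow> real)
    \<Rightarrow> ('v \<Rightarrow> 'v \<Rightarrow> real) \<Rightarrow> ('v \<Rightarrow> real) \<Rightarrow> real" where
  "d_par E J1 h1 J2 h2 = max (Max {\<bar>J1 u v - J2 u v\<bar> | u v. True})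
                             (Max {\<bar>h1 v - h2 v\<bar> / (real (deg E v) + 1) | v. True})"

definition B_const :: "real \<Rightarrow> real \<Rightarrow> real \<Rightarrow> real" where
  "B_const \<alpha> b \<theta> =
    (let s = (b powr (2*\<alpha>) * \<theta> powr \<alpha> / 2) powr (1 / (\<alpha> + 1))
     in (b powr (2*\<alpha>) * \<theta> powr \<alpha> / 2) * (s + 2) powr (-\<alpha>) * (2*s + 1) powr (-1))"

end

theory Submission
  imports Defs "HOL-Analysis.Analysis"
begin

definition flip :: "'v \<Rightarrow> ('v \<Rightarrow> real) \<Rightarrow> ('v \<Rightarrow> real)" where
  "flip v \<sigma> = \<sigma>(v := - \<sigma> v)"

lemma configs_PiE: "configs = PiE UNIV (\<lambda>_. {1, -1::real})"
  by (auto simp: configs_def PiE_def extensional_def Pi_def)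

lemma finite_configs: "finite (configs :: ('v::finite \<Rightarrow> real) set)"
  unfolding configs_PiE by (rule finite_PiE) auto

lemma one_in_configs: "(\<lambda>_. 1) \<in> configs"
  by (simp add: configs_def)

lemma configs_ne: "configs \<noteq> {}"
  using one_in_configs by blast

lemma flip_configs: "\<sigma> \<in> configs \<Longrightarrow> flip v \<sigma> \<in> configs"
  by (auto simp: configs_def flip_def)

lemma flip_flip[simp]: "flip v (flip v \<sigma>) = \<sigma>"
  by (auto simp: flip_def)

lemma flip_comm: "flip u (flip v \<sigma>) = flip v (flip u \<sigma>)"
  by (auto simp: flip_def fun_eq_iff)

lemma sum_flip: "(\<Sum>\<sigma>\<in>configs. f (flip v \<sigma>)) = (\<Sum>\<sigma>\<in>configs. f \<sigma>)"
  by (rule sum.reindex_bij_witness[of _ "flip v" "flip v"]) (auto simp: flip_configs)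

lemma configs_val: "\<sigma> \<in> configs \<Longrightarrow> \<sigma> v = 1 \<or> \<sigma> v = -1"
  by (simp add: configs_def)

lemma configs_abs: "\<sigma> \<in> configs \<Longrightarrow> \<bar>\<sigma> v\<bar> = 1"
  using configs_val[of \<sigma> v] by auto

lemma Z_pos: "(\<Sum>\<tau>\<in>(configs::('v::finite \<Rightarrow> real) set). gibbs_weight J h \<tau>) > 0"
  by (rule sum_pos[OF finite_configs configs_ne]) (simp add: gibbs_weight_def)

lemma gibbs_pos: "gibbs J h (\<sigma>::'v::finite \<Rightarrow> real) > 0"
  unfolding gibbs_def using Z_pos[of J h] by (simp add: gibbs_weight_def)

lemma gibbs_sum: "(\<Sum>\<sigma>\<in>(configs::('v::finite \<Rightarrow> real) set). gibbs J h \<sigma>) = 1"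
  unfolding gibbs_def using Z_pos[of J h] by (simp add: sum_divide_distrib[symmetric])

definition En :: "('v::finite \<Rightarrow> 'v \<Rightarrow> real) \<Rightarrow> ('v \<Rightarrow> real) \<Rightarrow> ('v \<Rightarrow> real) \<Rightarrow> real" where
  "En J h \<sigma> = (1/2) * (\<Sum>u\<in>UNIV. \<Sum>v\<in>UNIV. \<sigma> u * J u v * \<sigma> v) + (\<Sum>v\<in>UNIV. h v * \<sigma> v)"

lemma flip_eq: "flip v \<sigma> = (\<lambda>u. \<sigma> u - (if u = v then 2 * \<sigma> v else 0))"
  by (auto simp: flip_def fun_eq_iff)

lemma En_flip:
  fixes J :: "'v::finite \<Rightarrow> 'v \<Rightarrow> real"
  assumes sym: "\<And>u w. J u w = J w u" and diag: "J v v = 0"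
  shows "En J h \<sigma> - En J h (flip v \<sigma>) = 2 * \<sigma> v * (h v + (\<Sum>w\<in>UNIV. J v w * \<sigma> w))"
proof -
  define d where "d u = (if u = v then 2 * \<sigma> v else 0)" for u
  have fl: "flip v \<sigma> = (\<lambda>u. \<sigma> u - d u)" by (simp add: flip_eq d_def)
  have e1: "(\<Sum>u\<in>UNIV. \<Sum>w\<in>UNIV. (\<sigma> u - d u) * J u w * (\<sigma> w - d w)) =
     (\<Sum>u\<in>UNIV. \<Sum>w\<in>UNIV. \<sigma> u * J u w * \<sigma> w) - (\<Sum>u\<in>UNIV. \<Sum>w\<in>UNIV. d u * J u w * \<sigma> w)
     - (\<Sum>u\<in>UNIV. \<Sum>w\<in>UNIV. \<sigma> u * J u w * d w) + (\<Sum>u\<in>UNIV. \<Sum>w\<in>UNIV. d u * J u w * d w)"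
    by (simp add: algebra_simps sum.distrib sum_subtractf)
  have dm: "d u * X = (if u = v then 2 * \<sigma> v * X else 0)" for u X by (simp add: d_def)
  have md: "X * d u = (if u = v then 2 * \<sigma> v * X else 0)" for u X by (simp add: d_def)
  have e2: "(\<Sum>u\<in>UNIV. \<Sum>w\<in>UNIV. d u * J u w * \<sigma> w) = 2 * \<sigma> v * (\<Sum>w\<in>UNIV. J v w * \<sigma> w)"
  proof -
    have "(\<Sum>u\<in>UNIV. \<Sum>w\<in>UNIV. d u * J u w * \<sigma> w) = (\<Sum>u\<in>UNIV. d u * (\<Sum>w\<in>UNIV. J u w * \<sigma> w))"
      by (simp add: sum_distrib_left mult.assoc)
    also have "\<dots> = 2 * \<sigma> v * (\<Sum>w\<in>UNIV. J v w * \<sigma> w)"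
      unfolding dm by simp
    finally show ?thesis .
  qed
  have e3: "(\<Sum>u\<in>UNIV. \<Sum>w\<in>UNIV. \<sigma> u * J u w * d w) = 2 * \<sigma> v * (\<Sum>w\<in>UNIV. J v w * \<sigma> w)"
  proof -
    have "(\<Sum>u\<in>UNIV. \<Sum>w\<in>UNIV. \<sigma> u * J u w * d w) = (\<Sum>u\<in>UNIV. 2 * \<sigma> v * (\<sigma> u * J u v))"
      unfolding md by simp
    also have "\<dots> = 2 * \<sigma> v * (\<Sum>w\<in>UNIV. J v w * \<sigma> w)"
      by (simp add: sum_distrib_left sym[of _ v] mult.commute)
    finally show ?thesis .
  qed
  have e4: "(\<Sum>u\<in>UNIV. \<Sum>w\<in>UNIV. d u * J u w * d w) = 0"
  proof -
    show ?thesis unfolding md by (simp, intro sum.neutral) (auto simp: d_def diag)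
  qed
  have e5: "(\<Sum>w\<in>UNIV. h w * (\<sigma> w - d w)) = (\<Sum>w\<in>UNIV. h w * \<sigma> w) - 2 * \<sigma> v * h v"
  proof -
    have "(\<Sum>w\<in>UNIV. h w * d w) = 2 * \<sigma> v * h v" unfolding md by simp
    then show ?thesis by (simp add: right_diff_distrib sum_subtractf)
  qed
  show ?thesis
    unfolding En_def fl using e1 e2 e3 e4 e5 by (simp add: algebra_simps)
qed

lemma gw_exp: "gibbs_weight J h \<sigma> = exp (En J h \<sigma>)"
  by (simp add: gibbs_weight_def En_def)

lemma gibbs_ratio:
  fixes \<sigma> \<sigma>' :: "'v::finite \<Rightarrow> real"
  shows "gibbs J h \<sigma> * gibbs J' h' \<sigma>' =
    exp ((En J h \<sigma> - En J h \<sigma>') - (En J' h' \<sigma> - En J' h' \<sigma>')) * gibbs J h \<sigma>' * gibbs J' h' \<sigma>"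
proof -
  have "exp ((En J h \<sigma> - En J h \<sigma>') - (En J' h' \<sigma> - En J' h' \<sigma>')) * exp (En J h \<sigma>') * exp (En J' h' \<sigma>)
      = exp (En J h \<sigma>) * exp (En J' h' \<sigma>')"
    by (simp add: exp_add[symmetric])
  then show ?thesis
    unfolding gibbs_def gw_exp by (simp add: field_simps)
qed

lemma configs_ne0: "\<sigma> \<in> configs \<Longrightarrow> \<sigma> v \<noteq> - \<sigma> v"
  using configs_val[of \<sigma> v] by auto

lemma flip_ne: "\<sigma> \<in> configs \<Longrightarrow> flip v \<sigma> \<noteq> \<sigma>"
  by (auto simp: flip_def fun_eq_iff dest: configs_ne0)

lemma mb_single:
  fixes p :: "('v::finite \<Rightarrow> real) \<Rightarrow> real"
  assumes "marginally_bounded b p" "\<sigma> \<in> configs"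
  shows "b \<le> p \<sigma> / (p \<sigma> + p (flip v \<sigma>))"
proof -
  have c: "\<sigma> v = 1 \<or> \<sigma> v = -1" using configs_val[OF assms(2)] .
  have *: "b \<le> (\<Sum>\<sigma>'\<in>{\<sigma>'\<in>configs. (\<forall>u\<in>-{v}. \<sigma>' u = \<sigma> u) \<and> \<sigma>' v = \<sigma> v}. p \<sigma>')
          / (\<Sum>\<sigma>'\<in>{\<sigma>'\<in>configs. \<forall>u\<in>-{v}. \<sigma>' u = \<sigma> u}. p \<sigma>')"
    using assms(1) assms(2) c unfolding marginally_bounded_def by blast
  have s1: "{\<sigma>'\<in>configs. (\<forall>u\<in>-{v}. \<sigma>' u = \<sigma> u) \<and> \<sigma>' v = \<sigma> v} = {\<sigma>}"
  proof (intro equalityI subsetI)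
    fix \<sigma>' assume "\<sigma>' \<in> {\<sigma>'\<in>configs. (\<forall>u\<in>-{v}. \<sigma>' u = \<sigma> u) \<and> \<sigma>' v = \<sigma> v}"
    then have "\<forall>u. \<sigma>' u = \<sigma> u" by auto
    then show "\<sigma>' \<in> {\<sigma>}" by (simp add: fun_eq_iff)
  qed (use assms in auto)
  have s2: "{\<sigma>'\<in>configs. \<forall>u\<in>-{v}. \<sigma>' u = \<sigma> u} = {\<sigma>, flip v \<sigma>}"
  proof (intro equalityI subsetI)
    fix \<sigma>' assume "\<sigma>' \<in> {\<sigma>'\<in>configs. \<forall>u\<in>-{v}. \<sigma>' u = \<sigma> u}"
    then have a: "\<sigma>' \<in> configs" "\<forall>u. u \<noteq> v \<longrightarrow> \<sigma>' u = \<sigma> u" by auto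
    have "\<sigma>' v = \<sigma> v \<or> \<sigma>' v = - \<sigma> v" using configs_val[OF a(1), of v] c by auto
    then show "\<sigma>' \<in> {\<sigma>, flip v \<sigma>}" using a by (auto simp: fun_eq_iff flip_def)
  qed (use assms(2) flip_configs[OF assms(2), of v] in \<open>auto simp: flip_def split: if_splits\<close>)
  show ?thesis using * unfolding s1 s2 using flip_ne[OF assms(2), of v] by (simp add: add.commute)
qed

lemma mb_double:
  fixes p :: "('v::finite \<Rightarrow> real) \<Rightarrow> real"
  assumes "marginally_bounded b p" "\<sigma> \<in> configs" "u \<noteq> v"
  shows "b \<le> (p \<sigma> + p (flip v \<sigma>)) / (p \<sigma> + p (flip v \<sigma>) + p (flip u \<sigma>) + p (flip u (flip v \<sigma>)))"
proof -
  have c: "\<sigma> u = 1 \<or> \<sigma> u = -1" using configs_val[OF assms(2)] .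
  have cv: "\<sigma> v = 1 \<or> \<sigma> v = -1" using configs_val[OF assms(2)] .
  have H: "\<And>\<Lambda> \<tau> w c. \<tau> \<in> configs \<Longrightarrow> w \<notin> \<Lambda> \<Longrightarrow> (c = 1 \<or> c = -1) \<Longrightarrow>
        (\<Sum>\<sigma>\<in>{\<sigma>\<in>configs. (\<forall>u\<in>\<Lambda>. \<sigma> u = \<tau> u) \<and> \<sigma> w = c}. p \<sigma>)
          / (\<Sum>\<sigma>\<in>{\<sigma>\<in>configs. \<forall>u\<in>\<Lambda>. \<sigma> u = \<tau> u}. p \<sigma>) \<ge> b"
    using assms(1) unfolding marginally_bounded_def by blast
  have *: "b \<le> (\<Sum>\<sigma>'\<in>{\<sigma>'\<in>configs. (\<forall>w\<in>-{u,v}. \<sigma>' w = \<sigma> w) \<and> \<sigma>' u = \<sigma> u}. p \<sigma>')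
          / (\<Sum>\<sigma>'\<in>{\<sigma>'\<in>configs. \<forall>w\<in>-{u,v}. \<sigma>' w = \<sigma> w}. p \<sigma>')"
    using H[of \<sigma> u "-{u,v}" "\<sigma> u", OF assms(2) _ c] by simp
  have s1: "{\<sigma>'\<in>configs. (\<forall>w\<in>-{u,v}. \<sigma>' w = \<sigma> w) \<and> \<sigma>' u = \<sigma> u} = {\<sigma>, flip v \<sigma>}"
  proof (intro equalityI subsetI)
    fix \<sigma>' assume "\<sigma>' \<in> {\<sigma>'\<in>configs. (\<forall>w\<in>-{u,v}. \<sigma>' w = \<sigma> w) \<and> \<sigma>' u = \<sigma> u}"
    then have a: "\<sigma>' \<in> configs" "\<forall>w. w \<noteq> v \<longrightarrow> \<sigma>' w = \<sigma> w" by auto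
    have "\<sigma>' v = \<sigma> v \<or> \<sigma>' v = - \<sigma> v" using configs_val[OF a(1), of v] cv by auto
    then show "\<sigma>' \<in> {\<sigma>, flip v \<sigma>}" using a by (auto simp: fun_eq_iff flip_def)
  next
    fix \<sigma>' assume "\<sigma>' \<in> {\<sigma>, flip v \<sigma>}"
    then show "\<sigma>' \<in> {\<sigma>'\<in>configs. (\<forall>w\<in>-{u,v}. \<sigma>' w = \<sigma> w) \<and> \<sigma>' u = \<sigma> u}"
      using assms flip_configs[OF assms(2), of v] by (auto simp: flip_def split: if_splits)
  qed
  have s2: "{\<sigma>'\<in>configs. \<forall>w\<in>-{u,v}. \<sigma>' w = \<sigma> w} = {\<sigma>, flip v \<sigma>, flip u \<sigma>, flip u (flip v \<sigma>)}"
  proof (intro equalityI subsetI)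
    fix \<sigma>' assume "\<sigma>' \<in> {\<sigma>'\<in>configs. \<forall>w\<in>-{u,v}. \<sigma>' w = \<sigma> w}"
    then have a: "\<sigma>' \<in> configs" "\<forall>w. w \<noteq> v \<longrightarrow> w \<noteq> u \<longrightarrow> \<sigma>' w = \<sigma> w" by auto
    have "\<sigma>' v = \<sigma> v \<or> \<sigma>' v = - \<sigma> v" using configs_val[OF a(1), of v] cv by auto
    moreover have "\<sigma>' u = \<sigma> u \<or> \<sigma>' u = - \<sigma> u" using configs_val[OF a(1), of u] c by auto
    ultimately show "\<sigma>' \<in> {\<sigma>, flip v \<sigma>, flip u \<sigma>, flip u (flip v \<sigma>)}"
      using a assms(3) by (auto simp: fun_eq_iff flip_def)
  next
    fix \<sigma>' assume "\<sigma>' \<in> {\<sigma>, flip v \<sigma>, flip u \<sigma>, flip u (flip v \<sigma>)}"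
    moreover have "flip v \<sigma> \<in> configs" "flip u \<sigma> \<in> configs" "flip u (flip v \<sigma>) \<in> configs"
      using assms(2) by (simp_all add: flip_configs)
    ultimately show "\<sigma>' \<in> {\<sigma>'\<in>configs. \<forall>w\<in>-{u,v}. \<sigma>' w = \<sigma> w}"
      using assms(2) by (auto simp: flip_def split: if_splits)
  qed
  have d1: "\<sigma> u \<noteq> - \<sigma> u" "\<sigma> v \<noteq> - \<sigma> v" using configs_ne0[OF assms(2)] by auto
  have n1: "\<sigma> \<noteq> flip v \<sigma>" "\<sigma> \<noteq> flip u \<sigma>" "\<sigma> \<noteq> flip u (flip v \<sigma>)"
     "flip v \<sigma> \<noteq> flip u \<sigma>" "flip v \<sigma> \<noteq> flip u (flip v \<sigma>)" "flip u \<sigma> \<noteq> flip u (flip v \<sigma>)"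
    using d1 assms(3) unfolding flip_def fun_eq_iff
    by (metis fun_upd_same fun_upd_other)+
  show ?thesis using * unfolding s1 s2 using n1 by (simp add: algebra_simps)
qed

lemma pair_step1:
  fixes m1 m2 n1 n2 :: real
  assumes "m1 > 0" "m2 > 0" "n1 > 0" "n2 > 0"
  shows "\<bar>n1 - m1\<bar> + \<bar>n2 - m2\<bar> \<ge> (m1 + m2) * \<bar>n1/(n1+n2) - m1/(m1+m2)\<bar>"
proof -
  define P N p q where "P = m1 + m2" "N = n1 + n2" "p = m1 / P" "q = n1 / N"
  have PN: "P > 0" "N > 0" using assms by (auto simp: P_N_p_q_def)
  have e: "n1 = N * q" "m1 = P * p" "n2 = N * (1 - q)" "m2 = P * (1 - p)"
    using PN unfolding P_N_p_q_def by (simp_all add: field_simps)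
  have q01: "0 \<le> q" "0 \<le> 1 - q" "0 \<le> p" "0 \<le> 1 - p"
    using e assms PN by (metis less_eq_real_def zero_less_mult_pos)+
  have m: "P * q - P * p = P * (q - p)" "P * (1 - q) - P * (1 - p) = P * (p - q)" "P * (p - q) = - (P * (q - p))"
    by (simp_all add: algebra_simps)
  have Pq: "P * (q - p) \<ge> 0 \<longleftrightarrow> q \<ge> p" "P * (p - q) \<ge> 0 \<longleftrightarrow> p \<ge> q" using PN
    by (simp_all add: zero_le_mult_iff)
  have abseq: "q \<ge> p \<Longrightarrow> P * \<bar>q - p\<bar> = P * (q - p)" "\<not> q \<ge> p \<Longrightarrow> P * \<bar>q - p\<bar> = P * (p - q)"
    by auto
  have ab: "\<bar>N * q - P * p\<bar> \<ge> N * q - P * p" "\<bar>N * q - P * p\<bar> \<ge> -(N * q - P * p)"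
    "\<bar>N * (1 - q) - P * (1 - p)\<bar> \<ge> N * (1 - q) - P * (1 - p)"
    "\<bar>N * (1 - q) - P * (1 - p)\<bar> \<ge> -(N * (1 - q) - P * (1 - p))"
    "\<bar>N * q - P * p\<bar> \<ge> 0" "\<bar>N * (1 - q) - P * (1 - p)\<bar> \<ge> 0" by auto
  have "\<bar>N * q - P * p\<bar> + \<bar>N * (1 - q) - P * (1 - p)\<bar> \<ge> P * \<bar>q - p\<bar>"
  proof (cases "N \<ge> P")
    case True
    have a: "N * q \<ge> P * q" "N * (1 - q) \<ge> P * (1 - q)" using True q01 by (auto intro: mult_right_mono)
    show ?thesis
    proof (cases "q \<ge> p")
      case qp: True
      have "P * \<bar>q - p\<bar> = P * (q - p)" using qp by simp
      then show ?thesis using a m ab by linarith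
    next
      case qp: False
      have "P * \<bar>q - p\<bar> = P * (p - q)" using qp by simp
      then show ?thesis using a m ab by linarith
    qed
  next
    case False
    have a: "N * q \<le> P * q" "N * (1 - q) \<le> P * (1 - q)" using False q01 by (auto intro: mult_right_mono)
    show ?thesis
    proof (cases "q \<ge> p")
      case qp: True
      have "P * \<bar>q - p\<bar> = P * (q - p)" using qp by simp
      then show ?thesis using a m ab by linarith
    next
      case qp: False
      have "P * \<bar>q - p\<bar> = P * (p - q)" using qp by simp
      then show ?thesis using a m ab by linarith
    qed
  qed
  then have "\<bar>n1 - m1\<bar> + \<bar>n2 - m2\<bar> \<ge> P * \<bar>q - p\<bar>" unfolding e[symmetric] .
  moreover have "(m1 + m2) * \<bar>n1/(n1+n2) - m1/(m1+m2)\<bar> = P * \<bar>q - p\<bar>" by (simp add: P_N_p_q_def)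
  ultimately show ?thesis by simp
qed

lemma sinh_bound: "\<bar>x::real\<bar> \<le> \<bar>exp (x/2) - exp (-(x/2))\<bar>"
proof -
  have "\<bar>x/2\<bar> \<le> \<bar>(exp (x/2) - inverse (exp (x/2))) / 2\<bar>" by (rule real_le_abs_sinh)
  then show ?thesis by (simp add: exp_minus)
qed

lemma pair_step2:
  fixes p q b x :: real
  assumes "b \<le> p" "b \<le> 1 - p" "b \<le> q" "b \<le> 1 - q" "b > 0"
    and rat: "q * (1 - p) = exp x * (p * (1 - q))"
  shows "\<bar>q - p\<bar> \<ge> b * (1 - b) * \<bar>x\<bar>"
proof -
  define a c where "a = p * (1 - q)" "c = q * (1 - p)"
  have cma: "q - p = c - a" by (simp add: a_c_def algebra_simps)
  have c: "c = exp x * a" using rat by (simp add: a_c_def)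
  have ex: "exp (x/2) * exp (x/2) = exp x" by (simp add: exp_add[symmetric])
  have ex2: "exp (x/2) * exp (-(x/2)) = 1" by (simp add: exp_add[symmetric])
  have sq: "(c - a)^2 = a * c * (exp (x/2) - exp (-(x/2)))^2"
  proof -
    have "a * c * (exp (x/2) - exp (-(x/2)))^2 = a * a * (exp x * (exp (x/2) - exp (-(x/2)))^2)"
      by (simp add: c algebra_simps)
    also have "exp x * (exp (x/2) - exp (-(x/2)))^2 = (exp x - 1)^2"
      unfolding ex[symmetric] power2_eq_square using ex2 by (simp add: algebra_simps)
    finally show ?thesis by (simp add: c power2_eq_square algebra_simps)
  qed
  have pp: "p * (1 - p) \<ge> b * (1 - b)"
  proof -
    have "p * (1 - p) - b * (1 - b) = (p - b) * (1 - b - p)" by (simp add: algebra_simps)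
    also have "\<dots> \<ge> 0" using assms by simp
    finally show ?thesis by simp
  qed
  have qq: "q * (1 - q) \<ge> b * (1 - b)"
  proof -
    have "q * (1 - q) - b * (1 - b) = (q - b) * (1 - b - q)" by (simp add: algebra_simps)
    also have "\<dots> \<ge> 0" using assms by simp
    finally show ?thesis by simp
  qed
  have b1: "b * (1 - b) \<ge> 0" using assms by simp
  have ac: "a * c \<ge> (b * (1 - b))^2"
  proof -
    have "a * c = (p * (1 - p)) * (q * (1 - q))" by (simp add: a_c_def algebra_simps)
    also have "\<dots> \<ge> (b * (1 - b)) * (b * (1 - b))" by (rule mult_mono[OF pp qq]) (use pp b1 in linarith)+
    finally show ?thesis by (simp add: power2_eq_square)
  qed
  have xs: "x^2 \<le> (exp (x/2) - exp (-(x/2)))^2"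
    using sinh_bound[of x] by (metis abs_le_square_iff)
  have "(b * (1 - b) * \<bar>x\<bar>)^2 = (b * (1 - b))^2 * x^2" by (simp add: power_mult_distrib)
  also have "\<dots> \<le> a * c * (exp (x/2) - exp (-(x/2)))^2"
    by (rule mult_mono[OF ac xs]) (use ac zero_le_power2[of "b * (1 - b)"] zero_le_power2[of x] in linarith)+
  also have "\<dots> = (q - p)^2" using sq cma by simp
  finally have "(b * (1 - b) * \<bar>x\<bar>)^2 \<le> (q - p)^2" .
  then have "\<bar>b * (1 - b) * \<bar>x\<bar>\<bar> \<le> \<bar>q - p\<bar>" by (simp add: abs_le_square_iff)
  then show ?thesis by simp
qed

lemma pair_ineq:
  fixes m1 m2 n1 n2 b x :: real
  assumes pos: "m1 > 0" "m2 > 0" "n1 > 0" "n2 > 0" "b > 0"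
    and bs: "b \<le> m1/(m1+m2)" "b \<le> m2/(m1+m2)" "b \<le> n1/(n1+n2)" "b \<le> n2/(n1+n2)"
    and rat: "n1 * m2 = exp x * n2 * m1"
  shows "\<bar>n1 - m1\<bar> + \<bar>n2 - m2\<bar> \<ge> (m1 + m2) * (b * (1 - b) * \<bar>x\<bar>)"
proof -
  define p q where "p = m1/(m1+m2)" "q = n1/(n1+n2)"
  have p1: "1 - p = m2/(m1+m2)" "1 - q = n2/(n1+n2)" using pos by (auto simp: p_q_def field_simps)
  have "q * (1 - p) = exp x * (p * (1 - q))"
    unfolding p1 unfolding p_q_def using rat pos by (simp add: field_simps)
  moreover have "b \<le> p" "b \<le> 1 - p" "b \<le> q" "b \<le> 1 - q"
    using bs unfolding p1 by (simp_all add: p_q_def)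
  ultimately have "\<bar>q - p\<bar> \<ge> b * (1 - b) * \<bar>x\<bar>"
    using pair_step2[of b p q x] pos(5) by blast
  then have "(m1 + m2) * \<bar>q - p\<bar> \<ge> (m1 + m2) * (b * (1 - b) * \<bar>x\<bar>)"
    using pos by (intro mult_left_mono) auto
  then show ?thesis using pair_step1[OF pos(1-4)] by (simp add: p_q_def)
qed

lemma ising_diag: "ising_model E J h \<Longrightarrow> J v v = 0"
  unfolding ising_model_def simple_graph_def by blast

lemma ising_sym: "ising_model E J h \<Longrightarrow> J u w = J w u"
  unfolding ising_model_def by blast

definition Dv :: "('v::finite \<Rightarrow> 'v \<Rightarrow> real) \<Rightarrow> ('v \<Rightarrow> real) \<Rightarrow> 'v \<Rightarrow> ('v \<Rightarrow> real) \<Rightarrow> real" where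
  "Dv K g v \<sigma> = g v + (\<Sum>w\<in>UNIV. K v w * \<sigma> w)"

lemma Dv_flip_same:
  assumes "K v v = 0"
  shows "Dv K g v (flip v \<sigma>) = Dv K g v \<sigma>"
proof -
  have "(\<Sum>w\<in>UNIV. K v w * flip v \<sigma> w) = (\<Sum>w\<in>UNIV. K v w * \<sigma> w)"
    by (rule sum.cong) (use assms in \<open>auto simp: flip_def\<close>)
  then show ?thesis by (simp add: Dv_def)
qed

lemma Dv_flip_other:
  shows "Dv K g v (flip u \<sigma>) = Dv K g v \<sigma> - 2 * K v u * \<sigma> u"
proof -
  have "(\<Sum>w\<in>UNIV. K v w * flip u \<sigma> w) = (\<Sum>w\<in>UNIV. K v w * \<sigma> w - (if w = u then 2 * K v u * \<sigma> u else 0))"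
    by (rule sum.cong) (auto simp: flip_def algebra_simps)
  also have "\<dots> = (\<Sum>w\<in>UNIV. K v w * \<sigma> w) - 2 * K v u * \<sigma> u"
    by (simp add: sum_subtractf)
  finally show ?thesis by (simp add: Dv_def)
qed

context
  fixes E :: "'v::finite \<Rightarrow> 'v \<Rightarrow> bool"
    and J1 J2 :: "'v \<Rightarrow> 'v \<Rightarrow> real" and h1 h2 :: "'v \<Rightarrow> real" and b :: real
  assumes m1: "ising_model E J1 h1" and m2: "ising_model E J2 h2"
    and mb1: "marginally_bounded b (gibbs J1 h1)" and mb2: "marginally_bounded b (gibbs J2 h2)"
    and bpos: "b > 0"
begin

abbreviation "\<nu> \<equiv> gibbs J1 h1"
abbreviation "\<mu> \<equiv> gibbs J2 h2"
abbreviation "DJ \<equiv> (\<lambda>u w. J1 u w - J2 u w)"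
abbreviation "Dh \<equiv> (\<lambda>v. h1 v - h2 v)"

lemma DJ_diag: "DJ v v = 0"
  using ising_diag[OF m1] ising_diag[OF m2] by simp

lemma x_eq: "(En J1 h1 \<sigma> - En J1 h1 (flip v \<sigma>)) - (En J2 h2 \<sigma> - En J2 h2 (flip v \<sigma>))
   = 2 * \<sigma> v * Dv DJ Dh v \<sigma>"
  using En_flip[of J1 v h1 \<sigma>, OF ising_sym[OF m1] ising_diag[OF m1]]
    En_flip[of J2 v h2 \<sigma>, OF ising_sym[OF m2] ising_diag[OF m2]]
  by (simp add: Dv_def algebra_simps sum_subtractf)

lemma b_half: "b \<le> 1/2"
proof -
  define \<sigma> :: "'v \<Rightarrow> real" where "\<sigma> = (\<lambda>_. 1)"
  obtain v :: 'v where True by blast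
  have s: "\<sigma> \<in> configs" "flip v \<sigma> \<in> configs" by (simp_all add: \<sigma>_def one_in_configs flip_configs)
  have "b \<le> \<mu> \<sigma> / (\<mu> \<sigma> + \<mu> (flip v \<sigma>))" by (rule mb_single[OF mb2 s(1)])
  moreover have "b \<le> \<mu> (flip v \<sigma>) / (\<mu> (flip v \<sigma>) + \<mu> \<sigma>)"
    using mb_single[OF mb2 s(2), of v] by simp
  moreover have "\<mu> \<sigma> / (\<mu> \<sigma> + \<mu> (flip v \<sigma>)) + \<mu> (flip v \<sigma>) / (\<mu> (flip v \<sigma>) + \<mu> \<sigma>) = 1"
  proof -
    have ne: "\<mu> \<sigma> + \<mu> (flip v \<sigma>) \<noteq> 0"
      using gibbs_pos[of J2 h2 \<sigma>] gibbs_pos[of J2 h2 "flip v \<sigma>"] by linarith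
    have "\<mu> \<sigma> / (\<mu> \<sigma> + \<mu> (flip v \<sigma>)) + \<mu> (flip v \<sigma>) / (\<mu> (flip v \<sigma>) + \<mu> \<sigma>)
        = (\<mu> \<sigma> + \<mu> (flip v \<sigma>)) / (\<mu> \<sigma> + \<mu> (flip v \<sigma>))"
      by (simp only: add_divide_distrib add.commute[of "\<mu> (flip v \<sigma>)" "\<mu> \<sigma>"])
    then show ?thesis using ne by simp
  qed
  ultimately show ?thesis by linarith
qed

lemma pair_vertex:
  assumes "\<sigma> \<in> configs"
  shows "\<bar>\<nu> \<sigma> - \<mu> \<sigma>\<bar> + \<bar>\<nu> (flip v \<sigma>) - \<mu> (flip v \<sigma>)\<bar>
     \<ge> (\<mu> \<sigma> + \<mu> (flip v \<sigma>)) * (b * (1 - b) * (2 * \<bar>Dv DJ Dh v \<sigma>\<bar>))"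
proof -
  have fs: "flip v \<sigma> \<in> configs" using assms by (rule flip_configs)
  have rat: "\<nu> \<sigma> * \<mu> (flip v \<sigma>) = exp (2 * \<sigma> v * Dv DJ Dh v \<sigma>) * \<nu> (flip v \<sigma>) * \<mu> \<sigma>"
    using gibbs_ratio[of J1 h1 \<sigma> J2 h2 "flip v \<sigma>"] x_eq[of \<sigma> v] by simp
  have ax: "\<bar>2 * \<sigma> v * Dv DJ Dh v \<sigma>\<bar> = 2 * \<bar>Dv DJ Dh v \<sigma>\<bar>"
    using configs_abs[OF assms, of v] by (simp add: abs_mult)
  have "\<bar>\<nu> \<sigma> - \<mu> \<sigma>\<bar> + \<bar>\<nu> (flip v \<sigma>) - \<mu> (flip v \<sigma>)\<bar>
     \<ge> (\<mu> \<sigma> + \<mu> (flip v \<sigma>)) * (b * (1 - b) * \<bar>2 * \<sigma> v * Dv DJ Dh v \<sigma>\<bar>)"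
  proof (rule pair_ineq[OF gibbs_pos gibbs_pos gibbs_pos gibbs_pos bpos _ _ _ _ rat])
    show "b \<le> \<mu> \<sigma> / (\<mu> \<sigma> + \<mu> (flip v \<sigma>))" by (rule mb_single[OF mb2 assms])
    show "b \<le> \<nu> \<sigma> / (\<nu> \<sigma> + \<nu> (flip v \<sigma>))" by (rule mb_single[OF mb1 assms])
    show "b \<le> \<mu> (flip v \<sigma>) / (\<mu> \<sigma> + \<mu> (flip v \<sigma>))"
      using mb_single[OF mb2 fs, of v] by (simp add: add.commute)
    show "b \<le> \<nu> (flip v \<sigma>) / (\<nu> \<sigma> + \<nu> (flip v \<sigma>))"
      using mb_single[OF mb1 fs, of v] by (simp add: add.commute)
  qed
  then show ?thesis unfolding ax .
qed

lemma TV_vertex: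
  "(\<Sum>\<sigma>\<in>configs. \<bar>\<nu> \<sigma> - \<mu> \<sigma>\<bar>) \<ge> 2 * b * (1 - b) * (\<Sum>\<sigma>\<in>configs. \<mu> \<sigma> * \<bar>Dv DJ Dh v \<sigma>\<bar>)"
proof -
  define c where "c = b * (1 - b) * 2"
  have "2 * (\<Sum>\<sigma>\<in>configs. \<bar>\<nu> \<sigma> - \<mu> \<sigma>\<bar>) =
     (\<Sum>\<sigma>\<in>configs. \<bar>\<nu> \<sigma> - \<mu> \<sigma>\<bar> + \<bar>\<nu> (flip v \<sigma>) - \<mu> (flip v \<sigma>)\<bar>)"
    by (simp add: sum.distrib sum_flip[of "\<lambda>\<sigma>. \<bar>\<nu> \<sigma> - \<mu> \<sigma>\<bar>"])
  also have "\<dots> \<ge> (\<Sum>\<sigma>\<in>configs. (\<mu> \<sigma> + \<mu> (flip v \<sigma>)) * (c * \<bar>Dv DJ Dh v \<sigma>\<bar>))"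
  proof (rule sum_mono)
    fix \<sigma> :: "'v \<Rightarrow> real" assume s: "\<sigma> \<in> configs"
    have "(\<mu> \<sigma> + \<mu> (flip v \<sigma>)) * (c * \<bar>Dv DJ Dh v \<sigma>\<bar>) = (\<mu> \<sigma> + \<mu> (flip v \<sigma>)) * (b * (1 - b) * (2 * \<bar>Dv DJ Dh v \<sigma>\<bar>))"
      by (simp add: c_def mult_ac)
    then show "(\<mu> \<sigma> + \<mu> (flip v \<sigma>)) * (c * \<bar>Dv DJ Dh v \<sigma>\<bar>) \<le> \<bar>\<nu> \<sigma> - \<mu> \<sigma>\<bar> + \<bar>\<nu> (flip v \<sigma>) - \<mu> (flip v \<sigma>)\<bar>"
      using pair_vertex[OF s, of v] by linarith
  qed
  also have "(\<Sum>\<sigma>\<in>configs. (\<mu> \<sigma> + \<mu> (flip v \<sigma>)) * (c * \<bar>Dv DJ Dh v \<sigma>\<bar>)) =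
     (\<Sum>\<sigma>\<in>configs. \<mu> \<sigma> * (c * \<bar>Dv DJ Dh v \<sigma>\<bar>)) + (\<Sum>\<sigma>\<in>configs. \<mu> (flip v \<sigma>) * (c * \<bar>Dv DJ Dh v (flip v \<sigma>)\<bar>))"
    by (simp add: distrib_right sum.distrib Dv_flip_same[OF DJ_diag])
  also have "(\<Sum>\<sigma>\<in>configs. \<mu> (flip v \<sigma>) * (c * \<bar>Dv DJ Dh v (flip v \<sigma>)\<bar>)) = (\<Sum>\<sigma>\<in>configs. \<mu> \<sigma> * (c * \<bar>Dv DJ Dh v \<sigma>\<bar>))"
    by (rule sum_flip)
  finally have "2 * (\<Sum>\<sigma>\<in>configs. \<bar>\<nu> \<sigma> - \<mu> \<sigma>\<bar>) \<ge> 2 * (\<Sum>\<sigma>\<in>configs. \<mu> \<sigma> * (c * \<bar>Dv DJ Dh v \<sigma>\<bar>))"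
    by simp
  moreover have "(\<Sum>\<sigma>\<in>configs. \<mu> \<sigma> * (c * \<bar>Dv DJ Dh v \<sigma>\<bar>)) = c * (\<Sum>\<sigma>\<in>configs. \<mu> \<sigma> * \<bar>Dv DJ Dh v \<sigma>\<bar>)"
    by (simp add: sum_distrib_left mult_ac)
  ultimately show ?thesis by (simp add: c_def mult_ac)
qed

end

context
  fixes E :: "'v::finite \<Rightarrow> 'v \<Rightarrow> bool"
    and J1 J2 :: "'v \<Rightarrow> 'v \<Rightarrow> real" and h1 h2 :: "'v \<Rightarrow> real" and b :: real
  assumes m1: "ising_model E J1 h1" and m2: "ising_model E J2 h2"
    and mb1: "marginally_bounded b (gibbs J1 h1)" and mb2: "marginally_bounded b (gibbs J2 h2)"
    and bpos: "b > 0"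
begin

abbreviation "\<nu>' \<equiv> gibbs J1 h1"
abbreviation "\<mu>' \<equiv> gibbs J2 h2"

lemma M_edge:
  assumes uv: "u \<noteq> v" and th: "\<bar>J1 v u - J2 v u\<bar> \<ge> \<theta>"
  shows "(\<Sum>\<sigma>\<in>configs. \<mu>' \<sigma> * \<bar>Dv (\<lambda>u w. J1 u w - J2 u w) (\<lambda>v. h1 v - h2 v) v \<sigma>\<bar>) \<ge> 2 * b * \<theta>"
proof -
  define D where "D \<sigma> = \<bar>Dv (\<lambda>u w. J1 u w - J2 u w) (\<lambda>v. h1 v - h2 v) v \<sigma>\<bar>" for \<sigma>
  define G where "G \<sigma> = \<mu>' \<sigma> + \<mu>' (flip v \<sigma>)" for \<sigma>
  define M where "M = (\<Sum>\<sigma>\<in>configs. \<mu>' \<sigma> * D \<sigma>)"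
  have dg: "(\<lambda>u w. J1 u w - J2 u w) v v = 0"
    using ising_diag[OF m1] ising_diag[OF m2] by simp
  have Dfv: "D (flip v \<sigma>) = D \<sigma>" for \<sigma> unfolding D_def by (simp add: Dv_flip_same[of "\<lambda>u w. J1 u w - J2 u w" v, OF dg])
  have Gpos: "G \<sigma> > 0" for \<sigma> unfolding G_def using gibbs_pos[of J2 h2] by (simp add: add_pos_pos)
  have sumG: "(\<Sum>\<sigma>\<in>configs. G \<sigma>) = 2"
    unfolding G_def by (simp add: sum.distrib sum_flip[of "\<mu>'"] gibbs_sum)
  have s1: "(\<Sum>\<sigma>\<in>configs. G \<sigma> * D \<sigma>) = 2 * M"
  proof -
    have "(\<Sum>\<sigma>\<in>configs. G \<sigma> * D \<sigma>) = M + (\<Sum>\<sigma>\<in>configs. \<mu>' (flip v \<sigma>) * D (flip v \<sigma>))"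
      unfolding G_def M_def by (simp add: distrib_right sum.distrib Dfv)
    also have "(\<Sum>\<sigma>\<in>configs. \<mu>' (flip v \<sigma>) * D (flip v \<sigma>)) = M"
      unfolding M_def by (rule sum_flip)
    finally show ?thesis by simp
  qed
  have s2: "(\<Sum>\<sigma>\<in>configs. G \<sigma> * D \<sigma> + G (flip u \<sigma>) * D (flip u \<sigma>)) = 4 * M"
    using s1 by (simp add: sum.distrib sum_flip[of "\<lambda>\<sigma>. G \<sigma> * D \<sigma>"])
  have s3: "(\<Sum>\<sigma>\<in>configs. G \<sigma> + G (flip u \<sigma>)) = 4"
    using sumG by (simp add: sum.distrib sum_flip[of G])
  have pw: "G \<sigma> * D \<sigma> + G (flip u \<sigma>) * D (flip u \<sigma>) \<ge> 2 * b * \<theta> * (G \<sigma> + G (flip u \<sigma>))"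
    if s: "\<sigma> \<in> configs" for \<sigma>
  proof -
    have fs: "flip u \<sigma> \<in> configs" using s by (rule flip_configs)
    have b1: "b \<le> G \<sigma> / (G \<sigma> + G (flip u \<sigma>))"
      using mb_double[OF mb2 s uv] unfolding G_def by (simp add: flip_comm[of v u] add.assoc)
    have b2: "b \<le> G (flip u \<sigma>) / (G \<sigma> + G (flip u \<sigma>))"
      using mb_double[OF mb2 fs uv] unfolding G_def by (simp add: flip_comm[of v u] add_ac)
    have g1: "G \<sigma> \<ge> b * (G \<sigma> + G (flip u \<sigma>))"
      using b1 Gpos[of \<sigma>] Gpos[of "flip u \<sigma>"] by (simp add: pos_le_divide_eq)
    have g2: "G (flip u \<sigma>) \<ge> b * (G \<sigma> + G (flip u \<sigma>))"
      using b2 Gpos[of \<sigma>] Gpos[of "flip u \<sigma>"] by (simp add: pos_le_divide_eq)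
    have dd: "D \<sigma> + D (flip u \<sigma>) \<ge> 2 * \<theta>"
    proof -
      have "D (flip u \<sigma>) = \<bar>Dv (\<lambda>u w. J1 u w - J2 u w) (\<lambda>v. h1 v - h2 v) v \<sigma> - 2 * (J1 v u - J2 v u) * \<sigma> u\<bar>"
        unfolding D_def by (simp add: Dv_flip_other)
      moreover have "\<bar>2 * x * \<sigma> u\<bar> = 2 * \<bar>x\<bar>" for x
        using configs_abs[OF s, of u] by (simp add: abs_mult)
      moreover have "\<bar>a - (a - c)\<bar> \<le> \<bar>a\<bar> + \<bar>a - c\<bar>" for a c :: real
        by (rule abs_triangle_ineq4)
      ultimately have "D (flip u \<sigma>) = \<bar>Dv (\<lambda>u w. J1 u w - J2 u w) (\<lambda>v. h1 v - h2 v) v \<sigma> - 2 * (J1 v u - J2 v u) * \<sigma> u\<bar>"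
        "\<bar>2 * (J1 v u - J2 v u) * \<sigma> u\<bar> = 2 * \<bar>J1 v u - J2 v u\<bar>"
        "\<bar>Dv (\<lambda>u w. J1 u w - J2 u w) (\<lambda>v. h1 v - h2 v) v \<sigma> - (Dv (\<lambda>u w. J1 u w - J2 u w) (\<lambda>v. h1 v - h2 v) v \<sigma> - 2 * (J1 v u - J2 v u) * \<sigma> u)\<bar>
          \<le> \<bar>Dv (\<lambda>u w. J1 u w - J2 u w) (\<lambda>v. h1 v - h2 v) v \<sigma>\<bar> + \<bar>Dv (\<lambda>u w. J1 u w - J2 u w) (\<lambda>v. h1 v - h2 v) v \<sigma> - 2 * (J1 v u - J2 v u) * \<sigma> u\<bar>"
        by blast+
      then show ?thesis unfolding D_def using th by simp
    qed
    have D0: "D \<sigma> \<ge> 0" "D (flip u \<sigma>) \<ge> 0" by (simp_all add: D_def)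
    have "b * (G \<sigma> + G (flip u \<sigma>)) * (2 * \<theta>) \<le> b * (G \<sigma> + G (flip u \<sigma>)) * (D \<sigma> + D (flip u \<sigma>))"
      using dd bpos Gpos[of \<sigma>] Gpos[of "flip u \<sigma>"] by (intro mult_left_mono) auto
    also have "\<dots> = b * (G \<sigma> + G (flip u \<sigma>)) * D \<sigma> + b * (G \<sigma> + G (flip u \<sigma>)) * D (flip u \<sigma>)"
      by (simp add: algebra_simps)
    also have "\<dots> \<le> G \<sigma> * D \<sigma> + G (flip u \<sigma>) * D (flip u \<sigma>)"
      using mult_right_mono[OF g1 D0(1)] mult_right_mono[OF g2 D0(2)] by linarith
    finally show ?thesis by (simp add: mult_ac)
  qed
  have "4 * M \<ge> (\<Sum>\<sigma>\<in>configs. 2 * b * \<theta> * (G \<sigma> + G (flip u \<sigma>)))"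
    unfolding s2[symmetric] by (rule sum_mono) (rule pw)
  also have "(\<Sum>\<sigma>\<in>configs. 2 * b * \<theta> * (G \<sigma> + G (flip u \<sigma>))) = 2 * b * \<theta> * 4"
    by (simp add: sum_distrib_left[symmetric] s3)
  finally show ?thesis unfolding M_def D_def by (simp add: mult_ac)
qed

end

lemma dpar_split:
  fixes E :: "'v::finite \<Rightarrow> 'v \<Rightarrow> bool"
  assumes "\<theta> \<le> d_par E J1 h1 J2 h2"
  shows "(\<exists>u w. \<bar>J1 u w - J2 u w\<bar> \<ge> \<theta>) \<or> (\<exists>v. \<bar>h1 v - h2 v\<bar> / (real (deg E v) + 1) \<ge> \<theta>)"
proof (rule ccontr)
  assume "\<not> ?thesis"
  then have a: "\<forall>u w. \<bar>J1 u w - J2 u w\<bar> < \<theta>" "\<forall>v. \<bar>h1 v - h2 v\<bar> / (real (deg E v) + 1) < \<theta>"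
    by (auto simp: not_le)
  have s1: "{\<bar>J1 u v - J2 u v\<bar> | u v. True} = (\<lambda>(u,v). \<bar>J1 u v - J2 u v\<bar>) ` UNIV" by auto
  have s2: "{\<bar>h1 v - h2 v\<bar> / (real (deg E v) + 1) | v. True} = (\<lambda>v. \<bar>h1 v - h2 v\<bar> / (real (deg E v) + 1)) ` UNIV"
    by auto
  have "Max {\<bar>J1 u v - J2 u v\<bar> | u v. True} < \<theta>"
    unfolding s1 using a(1) by (subst Max_less_iff) auto
  moreover have "Max {\<bar>h1 v - h2 v\<bar> / (real (deg E v) + 1) | v. True} < \<theta>"
    unfolding s2 using a(2) by (subst Max_less_iff) auto
  ultimately have "d_par E J1 h1 J2 h2 < \<theta>" unfolding d_par_def by simp
  then show False using assms by simp
qed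

lemma vertex_bound:
  assumes m1: "ising_model E J1 h1" and m2: "ising_model E J2 h2"
    and a: "\<forall>u w. \<bar>J1 u w - J2 u w\<bar> < \<theta>" and hv: "\<bar>h1 v - h2 v\<bar> / (real (deg E v) + 1) \<ge> \<theta>"
    and s: "\<sigma> \<in> configs"
  shows "\<bar>Dv (\<lambda>u w. J1 u w - J2 u w) (\<lambda>v. h1 v - h2 v) v (\<sigma> :: 'v::finite \<Rightarrow> real)\<bar> \<ge> \<theta>"
proof -
  have th0: "\<theta> > 0" using a abs_ge_zero order.strict_trans1 by blast
  have symE: "E u w = E w u" for u w using m1 unfolding ising_model_def simple_graph_def by blast
  have nz: "w \<in> {w. E w v}" if "J1 v w - J2 v w \<noteq> 0" for w
  proof -
    have "J1 v w \<noteq> 0 \<or> J2 v w \<noteq> 0" using that by auto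
    then have "E v w" using m1 m2 unfolding ising_model_def by blast
    then show ?thesis using symE[of v w] by simp
  qed
  have "\<bar>\<Sum>w\<in>UNIV. (J1 v w - J2 v w) * \<sigma> w\<bar> \<le> (\<Sum>w\<in>UNIV. \<bar>(J1 v w - J2 v w) * \<sigma> w\<bar>)"
    by (rule sum_abs)
  also have "\<dots> = (\<Sum>w\<in>UNIV. \<bar>J1 v w - J2 v w\<bar>)"
    using configs_abs[OF s] by (simp add: abs_mult)
  also have "\<dots> = (\<Sum>w\<in>{w. E w v}. \<bar>J1 v w - J2 v w\<bar>)"
    by (rule sum.mono_neutral_right) (use nz in auto)
  also have "\<dots> \<le> real (card {w. E w v}) * \<theta>"
    using a by (intro sum_bounded_above) (simp add: less_imp_le)
  finally have sb: "\<bar>\<Sum>w\<in>UNIV. (J1 v w - J2 v w) * \<sigma> w\<bar> \<le> real (deg E v) * \<theta>"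
    by (simp add: deg_def)
  have "\<bar>h1 v - h2 v\<bar> \<ge> \<theta> * (real (deg E v) + 1)"
    using hv by (simp add: pos_le_divide_eq add_pos_nonneg)
  moreover have "\<bar>x\<bar> \<le> \<bar>x + y\<bar> + \<bar>y\<bar>" for x y :: real
    using abs_triangle_ineq4[of "x + y" y] by simp
  ultimately show ?thesis unfolding Dv_def using sb
    by (smt (verit, best) distrib_left mult.commute mult_cancel_right1)
qed

lemma TV_bound:
  fixes E :: "'v::finite \<Rightarrow> 'v \<Rightarrow> bool"
  assumes m1: "ising_model E J1 h1" and m2: "ising_model E J2 h2"
    and mb1: "marginally_bounded b (gibbs J1 h1)" and mb2: "marginally_bounded b (gibbs J2 h2)"
    and bpos: "b > 0" and th: "\<theta> > 0" and dp: "\<theta> \<le> d_par E J1 h1 J2 h2"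
  shows "(\<Sum>\<sigma>\<in>(configs :: ('v \<Rightarrow> real) set). \<bar>gibbs J1 h1 \<sigma> - gibbs J2 h2 \<sigma>\<bar>) \<ge> b^2 * \<theta>"
proof -
  note TVv = TV_vertex[OF m1 m2 mb1 mb2 bpos]
  have bh: "b \<le> 1/2" by (rule b_half[OF m1 m2 mb1 mb2 bpos])
  let ?S = "(\<Sum>\<sigma>\<in>(configs :: ('v \<Rightarrow> real) set). \<bar>gibbs J1 h1 \<sigma> - gibbs J2 h2 \<sigma>\<bar>)"
  show ?thesis
  proof (cases "\<exists>u w. \<bar>J1 u w - J2 u w\<bar> \<ge> \<theta>")
    case True
    then obtain v w where vw: "\<bar>J1 v w - J2 v w\<bar> \<ge> \<theta>" by blast
    have "w \<noteq> v" using vw th ising_diag[OF m1, of v] ising_diag[OF m2, of v] by auto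
    then have M: "(\<Sum>\<sigma>\<in>configs. gibbs J2 h2 \<sigma> * \<bar>Dv (\<lambda>u w. J1 u w - J2 u w) (\<lambda>v. h1 v - h2 v) v \<sigma>\<bar>) \<ge> 2 * b * \<theta>"
      using M_edge[OF m1 m2 mb1 mb2 bpos, of w v \<theta>] vw by blast
    have "?S \<ge> 2 * b * (1 - b) * (2 * b * \<theta>)"
    proof -
      have "2 * b * (1 - b) \<ge> 0" using bpos bh by simp
      from mult_left_mono[OF M this] TVv[of v] show ?thesis by linarith
    qed
    moreover have "2 * b * (1 - b) * (2 * b * \<theta>) \<ge> b^2 * \<theta>"
    proof -
      have "2 * b * (1 - b) * (2 * b * \<theta>) = (4 * (1 - b)) * (b^2 * \<theta>)" by (simp add: power2_eq_square algebra_simps)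
      moreover have "(4 * (1 - b)) * (b^2 * \<theta>) \<ge> 1 * (b^2 * \<theta>)"
        using bh th by (intro mult_right_mono) auto
      ultimately show ?thesis by (simp only: mult_1)
    qed
    ultimately show ?thesis by linarith
  next
    case False
    then have a: "\<forall>u w. \<bar>J1 u w - J2 u w\<bar> < \<theta>" by (auto simp: not_le)
    then obtain v where hv: "\<bar>h1 v - h2 v\<bar> / (real (deg E v) + 1) \<ge> \<theta>"
      using dpar_split[OF dp] False by blast
    have "(\<Sum>\<sigma>\<in>configs. gibbs J2 h2 \<sigma> * \<bar>Dv (\<lambda>u w. J1 u w - J2 u w) (\<lambda>v. h1 v - h2 v) v \<sigma>\<bar>)
        \<ge> (\<Sum>\<sigma>\<in>configs. gibbs J2 h2 \<sigma> * \<theta>)"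
      using vertex_bound[OF m1 m2 a hv] gibbs_pos[of J2 h2]
      by (intro sum_mono mult_left_mono) (auto simp: less_imp_le)
    also have "(\<Sum>\<sigma>\<in>configs. gibbs J2 h2 \<sigma> * \<theta>) = \<theta>"
      by (simp add: sum_distrib_right[symmetric] gibbs_sum)
    finally have M: "(\<Sum>\<sigma>\<in>configs. gibbs J2 h2 \<sigma> * \<bar>Dv (\<lambda>u w. J1 u w - J2 u w) (\<lambda>v. h1 v - h2 v) v \<sigma>\<bar>) \<ge> \<theta>" .
    have "?S \<ge> 2 * b * (1 - b) * \<theta>"
    proof -
      have "2 * b * (1 - b) \<ge> 0" using bpos bh by simp
      from mult_left_mono[OF M this] TVv[of v] show ?thesis by linarith
    qed
    moreover have "2 * b * (1 - b) * \<theta> \<ge> b^2 * \<theta>"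
    proof -
      have "2 * b * (1 - b) - b^2 = b * (2 - 3 * b)" by (simp add: power2_eq_square algebra_simps)
      also have "\<dots> \<ge> 0" using bpos bh by simp
      finally show ?thesis using th by (intro mult_right_mono) auto
    qed
    ultimately show ?thesis by linarith
  qed
qed

lemma tangent_powr:
  fixes \<alpha> m t :: real
  assumes a: "\<alpha> \<ge> 1" and m: "m > 0" and t: "t \<ge> 0"
  shows "m powr \<alpha> + \<alpha> * m powr (\<alpha> - 1) * (t - m) \<le> t powr \<alpha>"
proof (cases "t > 0")
  case True
  have "\<alpha> * m powr (\<alpha> - 1) * (t - m) \<le> t powr \<alpha> - m powr \<alpha>"
  proof (rule f''_imp_f'[where C = "{0<..}" and f = "\<lambda>x. x powr \<alpha>"
        and f' = "\<lambda>x. \<alpha> * x powr (\<alpha> - 1)" and f'' = "\<lambda>x. \<alpha> * ((\<alpha> - 1) * x powr (\<alpha> - 1 - 1))"])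
    show "convex {0::real<..}" by simp
    show "DERIV (\<lambda>x. x powr \<alpha>) x :> \<alpha> * x powr (\<alpha> - 1)" if "x \<in> {0<..}" for x
      using that by (intro has_real_derivative_powr) auto
    show "DERIV (\<lambda>x. \<alpha> * x powr (\<alpha> - 1)) x :> \<alpha> * ((\<alpha> - 1) * x powr (\<alpha> - 1 - 1))" if "x \<in> {0<..}" for x
      using that by (intro DERIV_cmult has_real_derivative_powr) auto
    show "0 \<le> \<alpha> * ((\<alpha> - 1) * x powr (\<alpha> - 1 - 1))" if "x \<in> {0<..}" for x
      using a by simp
  qed (use m True in auto)
  then show ?thesis by simp
next
  case False
  then have t0: "t = 0" using t by simp
  have "m powr (\<alpha> - 1) * m = m powr \<alpha>"
    using m by (simp add: powr_diff)
  then have "m powr \<alpha> + \<alpha> * m powr (\<alpha> - 1) * (t - m) = (1 - \<alpha>) * m powr \<alpha>"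
    using t0 by (simp add: algebra_simps)
  also have "\<dots> \<le> 0" using a by (simp add: mult_nonpos_nonneg)
  finally show ?thesis using t0 by simp
qed

lemma jensen_powr:
  fixes w t :: "'a \<Rightarrow> real"
  assumes a: "\<alpha> \<ge> 1" and fin: "finite S" and w: "\<And>i. i \<in> S \<Longrightarrow> w i \<ge> 0" and sw: "(\<Sum>i\<in>S. w i) = 1"
    and t: "\<And>i. i \<in> S \<Longrightarrow> t i \<ge> 0" and m: "(\<Sum>i\<in>S. w i * t i) > 0"
  shows "(\<Sum>i\<in>S. w i * t i) powr \<alpha> \<le> (\<Sum>i\<in>S. w i * t i powr \<alpha>)"
proof -
  define m where "m = (\<Sum>i\<in>S. w i * t i)"
  define c where "c = \<alpha> * m powr (\<alpha> - 1)"
  have "(\<Sum>i\<in>S. w i * (m powr \<alpha> + c * (t i - m))) \<le> (\<Sum>i\<in>S. w i * t i powr \<alpha>)"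
    by (rule sum_mono, rule mult_left_mono) (use tangent_powr[OF a] m t w in \<open>auto simp: m_def c_def\<close>)
  moreover have "(\<Sum>i\<in>S. w i * (m powr \<alpha> + c * (t i - m))) = m powr \<alpha> * (\<Sum>i\<in>S. w i) + c * ((\<Sum>i\<in>S. w i * t i) - m * (\<Sum>i\<in>S. w i))"
    by (simp add: algebra_simps sum.distrib sum_subtractf sum_distrib_left sum_distrib_right)
  ultimately show ?thesis using sw by (simp add: m_def)
qed

lemma pointwise_bound:
  fixes r s \<alpha> :: real
  assumes r: "r \<ge> 0" and s: "s > 0" and a: "\<alpha> \<ge> 1"
  shows "(r + 1) powr \<alpha> \<le> ((s + 2) / s) powr \<alpha> * \<bar>r - 1\<bar> powr \<alpha> + (s + 2) powr \<alpha>"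
proof (cases "\<bar>r - 1\<bar> \<ge> s")
  case True
  have "r + 1 \<le> \<bar>r - 1\<bar> + 2" by simp
  also have "2 \<le> 2 * \<bar>r - 1\<bar> / s" using True s by (simp add: pos_le_divide_eq)
  then have "\<bar>r - 1\<bar> + 2 \<le> (s + 2) / s * \<bar>r - 1\<bar>" using s by (simp add: field_simps)
  finally have "(r + 1) powr \<alpha> \<le> ((s + 2) / s * \<bar>r - 1\<bar>) powr \<alpha>"
    using r a by (intro powr_mono2) auto
  also have "\<dots> = ((s + 2) / s) powr \<alpha> * \<bar>r - 1\<bar> powr \<alpha>" by (rule powr_mult)
  finally show ?thesis by (simp add: add_increasing2)
next
  case False
  then have "r + 1 \<le> s + 2" by linarith
  then have "(r + 1) powr \<alpha> \<le> (s + 2) powr \<alpha>" using r a by (intro powr_mono2) auto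
  then show ?thesis by (simp add: add_increasing)
qed

lemma final_alg:
  fixes \<alpha> L chi S s :: real
  assumes a: "\<alpha> \<ge> 1" and L: "L > 0" and chi: "chi \<ge> L"
    and sdef: "s = L powr (1 / (\<alpha> + 1))"
    and S: "S \<le> ((s + 2) / s) powr \<alpha> * (2 * chi) + (s + 2) powr \<alpha>"
  shows "L * (s + 2) powr (-\<alpha>) * (2 * s + 1) powr (-1) * S \<le> chi"
proof -
  have s: "s > 0" using L sdef by simp
  have "s powr (\<alpha> + 1) = L" using L a unfolding sdef by (simp add: powr_powr)
  then have Ls: "L = s powr \<alpha> * s" using s by (simp add: powr_add)
  define P Q where "P = (s + 2) powr \<alpha>" "Q = s powr \<alpha>"
  have PQ: "P > 0" "Q > 0" using s by (simp_all add: P_Q_def)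
  have B: "L * (s + 2) powr (-\<alpha>) * (2 * s + 1) powr (-1) = L / (P * (2 * s + 1))"
    using s by (simp add: P_Q_def powr_minus divide_inverse powr_neg_one)
  have Bpos: "L / (P * (2 * s + 1)) \<ge> 0" using L PQ s by simp
  have S': "S \<le> P / Q * (2 * chi) + P" using S by (simp add: P_Q_def powr_divide)
  have "L / (P * (2 * s + 1)) * S \<le> L / (P * (2 * s + 1)) * (P / Q * (2 * chi) + P)"
    by (rule mult_left_mono[OF S' Bpos])
  also have "\<dots> = (2 * chi * (L / Q) + L) / (2 * s + 1)"
  proof -
    have ne: "P \<noteq> 0" "Q \<noteq> 0" "2 * s + 1 \<noteq> 0" using PQ s by auto
    show ?thesis using ne by (simp add: divide_simps) algebra
  qed
  also have "L / Q = s" using Ls PQ by (simp add: P_Q_def)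
  also have "(2 * chi * s + L) / (2 * s + 1) \<le> chi"
    using s chi by (simp add: pos_divide_le_eq algebra_simps)
  finally show ?thesis using B by simp
qed

theorem lemma2p3:
  fixes E :: "'v::finite \<Rightarrow> 'v \<Rightarrow> bool"
    and J\<nu> J\<mu> :: "'v \<Rightarrow> 'v \<Rightarrow> real" and h\<nu> h\<mu> :: "'v \<Rightarrow> real"
    and \<alpha> \<theta> b :: real
  assumes "\<alpha> \<ge> 1" and "0 < \<theta>" and "\<theta> \<le> 1" and "0 < b" and "b \<le> 1"
    and "ising_model E J\<nu> h\<nu>" and "ising_model E J\<mu> h\<mu>"
    and "d_par E J\<nu> h\<nu> J\<mu> h\<mu> \<ge> \<theta>"
    and "marginally_bounded b (gibbs J\<nu> h\<nu>)" and "marginally_bounded b (gibbs J\<mu> h\<mu>)"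
  shows "chi_div \<alpha> (gibbs J\<nu> h\<nu>) (gibbs J\<mu> h\<mu>) \<ge>
    B_const \<alpha> b \<theta> * (\<Sum>\<sigma>\<in>configs. gibbs J\<mu> h\<mu> \<sigma> *
        (gibbs J\<nu> h\<nu> \<sigma> / gibbs J\<mu> h\<mu> \<sigma> + 1) powr \<alpha>)"
proof -
  note a = assms
  let ?\<nu> = "gibbs J\<nu> h\<nu>" and ?\<mu> = "gibbs J\<mu> h\<mu>"
  define L where "L = b powr (2*\<alpha>) * \<theta> powr \<alpha> / 2"
  define s where "s = L powr (1 / (\<alpha> + 1))"
  define t where "t \<sigma> = \<bar>?\<nu> \<sigma> / ?\<mu> \<sigma> - 1\<bar>" for \<sigma> :: "'v \<Rightarrow> real"
  define chi where "chi = chi_div \<alpha> ?\<nu> ?\<mu>"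
  have mupos: "?\<mu> \<sigma> > 0" for \<sigma> by (rule gibbs_pos)
  have TV: "(\<Sum>\<sigma>\<in>(configs :: ('v \<Rightarrow> real) set). \<bar>?\<nu> \<sigma> - ?\<mu> \<sigma>\<bar>) \<ge> b^2 * \<theta>"
    by (rule TV_bound[OF a(6,7,9,10,4,2,8)])
  have mt: "?\<mu> \<sigma> * t \<sigma> = \<bar>?\<nu> \<sigma> - ?\<mu> \<sigma>\<bar>" for \<sigma>
  proof -
    have "?\<mu> \<sigma> * t \<sigma> = \<bar>?\<mu> \<sigma> * (?\<nu> \<sigma> / ?\<mu> \<sigma> - 1)\<bar>"
      using mupos[of \<sigma>] by (simp add: t_def abs_mult)
    also have "?\<mu> \<sigma> * (?\<nu> \<sigma> / ?\<mu> \<sigma> - 1) = ?\<nu> \<sigma> - ?\<mu> \<sigma>"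
      using mupos[of \<sigma>] by (simp add: field_simps)
    finally show ?thesis .
  qed
  have bt: "b^2 * \<theta> > 0" using a by simp
  have msum: "(\<Sum>\<sigma>\<in>configs. ?\<mu> \<sigma> * t \<sigma>) \<ge> b^2 * \<theta>" using TV by (simp add: mt)
  have J: "(\<Sum>\<sigma>\<in>configs. ?\<mu> \<sigma> * t \<sigma>) powr \<alpha> \<le> (\<Sum>\<sigma>\<in>configs. ?\<mu> \<sigma> * t \<sigma> powr \<alpha>)"
    by (rule jensen_powr[OF a(1) finite_configs]) (use mupos gibbs_sum msum bt in \<open>auto simp: less_imp_le t_def\<close>)
  have "(b^2 * \<theta>) powr \<alpha> \<le> (\<Sum>\<sigma>\<in>configs. ?\<mu> \<sigma> * t \<sigma>) powr \<alpha>"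
    using msum bt a(1) by (intro powr_mono2) auto
  moreover have "(b^2 * \<theta>) powr \<alpha> = b powr (2*\<alpha>) * \<theta> powr \<alpha>"
  proof -
    have "b^2 = b powr 2" using a(4) powr_realpow[of b 2] by (metis of_nat_numeral)
    then show ?thesis by (simp add: powr_mult powr_powr)
  qed
  moreover have chi2: "(\<Sum>\<sigma>\<in>configs. ?\<mu> \<sigma> * t \<sigma> powr \<alpha>) = 2 * chi"
    unfolding chi_def chi_div_def t_def by (simp add: sum_distrib_left mult_ac)
  ultimately have Lchi: "L \<le> chi" using J unfolding L_def by linarith
  have Lpos: "L > 0" unfolding L_def using a by simp
  have spos: "s > 0" unfolding s_def using Lpos by simp
  have "(\<Sum>\<sigma>\<in>configs. ?\<mu> \<sigma> * (?\<nu> \<sigma> / ?\<mu> \<sigma> + 1) powr \<alpha>)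
      \<le> (\<Sum>\<sigma>\<in>configs. ?\<mu> \<sigma> * (((s + 2) / s) powr \<alpha> * t \<sigma> powr \<alpha> + (s + 2) powr \<alpha>))"
  proof (rule sum_mono, rule mult_left_mono)
    fix \<sigma> :: "'v \<Rightarrow> real"
    have "?\<nu> \<sigma> / ?\<mu> \<sigma> \<ge> 0" using gibbs_pos[of J\<nu> h\<nu> \<sigma>] mupos[of \<sigma>] by simp
    then show "(?\<nu> \<sigma> / ?\<mu> \<sigma> + 1) powr \<alpha> \<le> ((s + 2) / s) powr \<alpha> * t \<sigma> powr \<alpha> + (s + 2) powr \<alpha>"
      unfolding t_def using pointwise_bound[OF _ spos a(1)] by blast
    show "0 \<le> ?\<mu> \<sigma>" using mupos[of \<sigma>] by simp
  qed
  also have "\<dots> = ((s + 2) / s) powr \<alpha> * (\<Sum>\<sigma>\<in>configs. ?\<mu> \<sigma> * t \<sigma> powr \<alpha>) + (s + 2) powr \<alpha> * (\<Sum>\<sigma>\<in>configs. ?\<mu> \<sigma>)"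
    by (simp add: algebra_simps sum.distrib sum_distrib_left sum_distrib_right)
  also have "\<dots> = ((s + 2) / s) powr \<alpha> * (2 * chi) + (s + 2) powr \<alpha>"
    by (simp add: chi2 gibbs_sum)
  finally have S: "(\<Sum>\<sigma>\<in>configs. ?\<mu> \<sigma> * (?\<nu> \<sigma> / ?\<mu> \<sigma> + 1) powr \<alpha>) \<le> ((s + 2) / s) powr \<alpha> * (2 * chi) + (s + 2) powr \<alpha>" .
  have "B_const \<alpha> b \<theta> = L * (s + 2) powr (-\<alpha>) * (2 * s + 1) powr (-1)"
    by (simp add: B_const_def Let_def L_def s_def)
  then show ?thesis
    using final_alg[OF a(1) Lpos Lchi s_def S] by (simp add: chi_def)
qed

end
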